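(* The metric space $(C^{lf}_\infty(\mathbb C),d_{\mathcal V})$ is path-connected.
   Context: $C^{lf}_\infty(\mathbb C)$ is the set of countably infinite locally finite subsets of $\mathbb C$ (i.e. meeting each compact set in finitely many points). $d_{\mathcal V}(A,B)=\sum_j 2^{-j}\frac{|\sum_{a\in A}\varphi_j(a)-\sum_{b\in B}\varphi_j(b)|}{1+|\sum_{a\in A}\varphi_j(a)-\sum_{b\in B}\varphi_j(b)|}$ for a fixed sequence $(\varphi_j)$ of compactly supported continuous real functions on $\mathbb C$ such that for each $m$ those supported in $\{|z|\le m\}$ are sup-norm dense among such functions supported in $\{|z|\le m\}$. *)

theory Defs
  imports "HOL-Analysis.Analysis"
begin

text \<open>Countably infinite locally finite subsets of the complex plane
  (infinite + meeting every compact set in finitely many points; such sets are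
  automatically countable, but we state countability explicitly).\<close>
definition Clf_inf :: "complex set set" where
  "Clf_inf = {A. infinite A \<and> countable A \<and> (\<forall>K. compact K \<longrightarrow> finite (A \<inter> K))}"

definition lf_sum :: "(complex \<Rightarrow> real) \<Rightarrow> complex set \<Rightarrow> real" where
  "lf_sum f A = (\<Sum>a\<in>{a\<in>A. f a \<noteq> 0}. f a)"

definition admissible_seq :: "(nat \<Rightarrow> complex \<Rightarrow> real) \<Rightarrow> bool" where
  "admissible_seq \<phi> \<longleftrightarrow>
     (\<forall>j. continuous_on UNIV (\<phi> j) \<and> compact (closure {z. \<phi> j z \<noteq> 0})) \<and>
     (\<forall>(m::nat) (f::complex \<Rightarrow> real) \<epsilon>. continuous_on UNIV f \<and> {z. f z \<noteq> 0} \<subseteq> cball 0 (real m)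
        \<and> \<epsilon> > 0 \<longrightarrow>
        (\<exists>j. {z. \<phi> j z \<noteq> 0} \<subseteq> cball 0 (real m) \<and> (\<forall>z. \<bar>f z - \<phi> j z\<bar> < \<epsilon>)))"

text \<open>The metric d_V (index j = 0,1,2,... corresponds to the paper's j = 1,2,3,...).\<close>
definition dV :: "(nat \<Rightarrow> complex \<Rightarrow> real) \<Rightarrow> complex set \<Rightarrow> complex set \<Rightarrow> real" where
  "dV \<phi> A B = (\<Sum>j. (1/2)^(Suc j) *
      (\<bar>lf_sum (\<phi> j) A - lf_sum (\<phi> j) B\<bar> / (1 + \<bar>lf_sum (\<phi> j) A - lf_sum (\<phi> j) B\<bar>)))"

end

theory Submission
  imports Defs
begin


lemma frac_le1: "\<bar>x::real\<bar> / (1 + \<bar>x\<bar>) \<le> 1"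
  by simp

lemma frac_nonneg: "0 \<le> \<bar>x::real\<bar> / (1 + \<bar>x\<bar>)"
  by simp

lemma frac_tri: "\<bar>a - c\<bar> / (1 + \<bar>a - c\<bar>) \<le> \<bar>a - b\<bar> / (1 + \<bar>a - b\<bar>) + \<bar>b - c\<bar> / (1 + \<bar>b - c\<bar>)"
  for a b c :: real
proof -
  define u where "u = \<bar>a - b\<bar>"
  define v where "v = \<bar>b - c\<bar>"
  define w where "w = \<bar>a - c\<bar>"
  have u: "u \<ge> 0" and v: "v \<ge> 0" and w: "w \<ge> 0" "w \<le> u + v"
    by (auto simp: u_def v_def w_def)
  have "w / (1 + w) \<le> (u + v) / (1 + (u + v))"
  proof -
    have "w * (1 + (u + v)) \<le> (u + v) * (1 + w)" using w by (simp add: algebra_simps)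
    then show ?thesis using u v w by (simp add: divide_simps)
  qed
  also have "\<dots> = u / (1 + (u + v)) + v / (1 + (u + v))" by (simp add: add_divide_distrib)
  also have "\<dots> \<le> u / (1 + u) + v / (1 + v)"
    using u v by (intro add_mono divide_left_mono) auto
  finally show ?thesis by (simp add: u_def v_def w_def)
qed

lemma geom_summable: "summable (\<lambda>j. (1/2::real)^Suc j)"
  using summable_mult[OF summable_geometric[of "1/2::real"], of "1/2"] by simp

lemma dV_term_summable: "summable (\<lambda>j. (1/2::real)^Suc j * (\<bar>x j\<bar> / (1 + \<bar>x j\<bar>)))"
proof (rule summable_comparison_test'[OF geom_summable])
  fix n show "norm ((1/2::real)^Suc n * (\<bar>x n\<bar> / (1 + \<bar>x n\<bar>))) \<le> (1/2)^Suc n"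
  proof -
    have "(1/2::real)^Suc n * (\<bar>x n\<bar> / (1 + \<bar>x n\<bar>)) \<le> (1/2)^Suc n * 1"
      by (rule mult_left_mono[OF frac_le1]) simp
    then show ?thesis by (simp del: power_Suc)
  qed
qed

lemma dV_summable: "summable (\<lambda>j. (1/2::real)^Suc j *
      (\<bar>lf_sum (\<phi> j) A - lf_sum (\<phi> j) B\<bar> / (1 + \<bar>lf_sum (\<phi> j) A - lf_sum (\<phi> j) B\<bar>)))"
  using dV_term_summable[of "\<lambda>j. lf_sum (\<phi> j) A - lf_sum (\<phi> j) B"] by simp

lemma dV_nonneg: "0 \<le> dV \<phi> A B"
  unfolding dV_def by (rule suminf_nonneg[OF dV_summable]) simp

lemma dV_commute: "dV \<phi> A B = dV \<phi> B A"
  unfolding dV_def by (simp add: abs_minus_commute)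

lemma dV_self: "dV \<phi> A A = 0"
  unfolding dV_def by simp

lemma dV_triangle: "dV \<phi> A C \<le> dV \<phi> A B + dV \<phi> B C"
  unfolding dV_def
  apply (subst suminf_add[OF dV_summable dV_summable])
  apply (rule suminf_le)
    apply (subst distrib_left[symmetric])
    apply (rule mult_left_mono[OF frac_tri])
    apply simp
   apply (rule dV_summable)
  apply (rule summable_add[OF dV_summable dV_summable])
  done

lemma lf_sum_superset:
  assumes "finite T" "{a\<in>A. f a \<noteq> 0} \<subseteq> T" "T \<subseteq> A"
  shows "lf_sum f A = (\<Sum>a\<in>T. f a)"
  unfolding lf_sum_def
  by (rule sum.mono_neutral_left) (use assms in auto)

lemma dV_pos:
  assumes adm: "admissible_seq \<phi>" and A: "A \<in> Clf_inf" and B: "B \<in> Clf_inf"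
    and a: "a \<in> A" "a \<notin> B"
  shows "dV \<phi> A B > 0"
proof -
  have lfA: "\<And>K. compact K \<Longrightarrow> finite (A \<inter> K)" and lfB: "\<And>K. compact K \<Longrightarrow> finite (B \<inter> K)"
    using A B by (auto simp: Clf_inf_def)
  have "finite ((A \<union> B) \<inter> cball a 1)"
    using lfA[of "cball a 1"] lfB[of "cball a 1"] by (simp add: Int_Un_distrib2)
  then obtain \<delta> where \<delta>: "\<delta> > 0" "\<And>x. x \<in> (A \<union> B) \<inter> cball a 1 \<Longrightarrow> x \<noteq> a \<Longrightarrow> \<delta> \<le> dist a x"
    using finite_set_avoid[of "(A \<union> B) \<inter> cball a 1" a] by blast
  define r where "r = min \<delta> 1"
  have r: "r > 0" "r \<le> 1" using \<delta> by (auto simp: r_def)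
  have far: "r \<le> dist a x" if "x \<in> A \<union> B" "x \<noteq> a" for x
  proof (cases "dist a x \<le> 1")
    case True then show ?thesis using \<delta>(2)[of x] that by (auto simp: r_def)
  next
    case False then show ?thesis using r by auto
  qed
  define f where "f z = max 0 (1 - norm (z - a) / r)" for z
  have fcont: "continuous_on UNIV f" unfolding f_def using r by (intro continuous_intros) auto
  have fa: "f a = 1" by (simp add: f_def)
  have f0: "f x = 0" if "x \<in> A \<union> B" "x \<noteq> a" for x
    using far[OF that] r by (simp add: f_def dist_norm norm_minus_commute field_simps)
  define m :: nat where "m = nat \<lceil>norm a\<rceil> + 1"
  have m: "norm a + 1 \<le> real m" unfolding m_def by linarith
  have fsupp: "{z. f z \<noteq> 0} \<subseteq> cball 0 (real m)"
  proof
    fix z assume "z \<in> {z. f z \<noteq> 0}"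
    then have fz: "f z \<noteq> 0" by simp
    have "\<not> r \<le> norm (z - a)"
    proof
      assume "r \<le> norm (z - a)"
      then have "1 \<le> norm (z - a) / r" using r by simp
      then have "f z = 0" by (simp add: f_def)
      then show False using fz by simp
    qed
    then have "norm (z - a) < r" by simp
    then have "norm z \<le> norm a + 1" using r norm_triangle_ineq2[of z a] by linarith
    then show "z \<in> cball 0 (real m)" using m by simp
  qed
  define C where "C = cball (0::complex) (real m)"
  define cA where "cA = card (A \<inter> C)"
  define cB where "cB = card (B \<inter> C)"
  define \<epsilon> :: real where "\<epsilon> = 1 / (2 * (real cA + real cB + 1))"
  have \<epsilon>: "\<epsilon> > 0" by (simp add: \<epsilon>_def)
  obtain j where j: "{z. \<phi> j z \<noteq> 0} \<subseteq> cball 0 (real m)" "\<And>z. \<bar>f z - \<phi> j z\<bar> < \<epsilon>"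
    using adm fcont fsupp \<epsilon> unfolding admissible_seq_def by blast
  have finA: "finite (A \<inter> C)" and finB: "finite (B \<inter> C)"
    using lfA lfB by (auto simp: C_def)
  have aC: "a \<in> A \<inter> C" using a m by (auto simp: C_def)
  have sA: "lf_sum (\<phi> j) A = (\<Sum>x\<in>A \<inter> C. \<phi> j x)"
    by (rule lf_sum_superset) (use finA j in \<open>auto simp: C_def\<close>)
  have sB: "lf_sum (\<phi> j) B = (\<Sum>x\<in>B \<inter> C. \<phi> j x)"
    by (rule lf_sum_superset) (use finB j in \<open>auto simp: C_def\<close>)
  have fA: "(\<Sum>x\<in>A \<inter> C. f x) = 1"
  proof -
    have "(\<Sum>x\<in>A \<inter> C. f x) = f a + (\<Sum>x\<in>A \<inter> C - {a}. f x)"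
      using finA aC by (simp add: sum.remove)
    also have "(\<Sum>x\<in>A \<inter> C - {a}. f x) = 0" using f0 by (intro sum.neutral) auto
    finally show ?thesis using fa by simp
  qed
  have fB: "(\<Sum>x\<in>B \<inter> C. f x) = 0" using f0 a by (intro sum.neutral) auto
  have eA: "\<bar>(\<Sum>x\<in>A \<inter> C. \<phi> j x) - 1\<bar> \<le> real cA * \<epsilon>"
  proof -
    have "\<bar>(\<Sum>x\<in>A \<inter> C. \<phi> j x) - 1\<bar> = \<bar>\<Sum>x\<in>A \<inter> C. (\<phi> j x - f x)\<bar>"
      using fA by (simp add: sum_subtractf)
    also have "\<dots> \<le> (\<Sum>x\<in>A \<inter> C. \<bar>\<phi> j x - f x\<bar>)" by (rule sum_abs)
    also have "\<dots> \<le> (\<Sum>x\<in>A \<inter> C. \<epsilon>)"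
      using j(2) by (intro sum_mono) (simp add: abs_minus_commute less_imp_le)
    finally show ?thesis by (simp add: cA_def)
  qed
  have eB: "\<bar>(\<Sum>x\<in>B \<inter> C. \<phi> j x)\<bar> \<le> real cB * \<epsilon>"
  proof -
    have "\<bar>(\<Sum>x\<in>B \<inter> C. \<phi> j x)\<bar> = \<bar>\<Sum>x\<in>B \<inter> C. (\<phi> j x - f x)\<bar>"
      using fB by (simp add: sum_subtractf)
    also have "\<dots> \<le> (\<Sum>x\<in>B \<inter> C. \<bar>\<phi> j x - f x\<bar>)" by (rule sum_abs)
    also have "\<dots> \<le> (\<Sum>x\<in>B \<inter> C. \<epsilon>)"
      using j(2) by (intro sum_mono) (simp add: abs_minus_commute less_imp_le)
    finally show ?thesis by (simp add: cB_def)
  qed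
  have "(real cA + real cB) * \<epsilon> < 1"
    unfolding \<epsilon>_def by (simp add: field_simps)
  then have ne: "lf_sum (\<phi> j) A - lf_sum (\<phi> j) B \<noteq> 0"
    using eA eB unfolding sA sB by (auto simp: algebra_simps abs_le_iff)
  show ?thesis unfolding dV_def
  proof (rule suminf_pos2[OF dV_summable, where i=j])
    have "0 < \<bar>lf_sum (\<phi> j) A - lf_sum (\<phi> j) B\<bar> / (1 + \<bar>lf_sum (\<phi> j) A - lf_sum (\<phi> j) B\<bar>)"
      using ne by (intro divide_pos_pos) auto
    then show "0 < (1/2::real)^Suc j * (\<bar>lf_sum (\<phi> j) A - lf_sum (\<phi> j) B\<bar> / (1 + \<bar>lf_sum (\<phi> j) A - lf_sum (\<phi> j) B\<bar>))"
      by (intro mult_pos_pos) simp_all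
  qed simp
qed

lemma dV_metric:
  assumes "admissible_seq \<phi>"
  shows "Metric_space Clf_inf (dV \<phi>)"
proof
  fix x y z
  show "0 \<le> dV \<phi> x y" by (rule dV_nonneg)
  show "dV \<phi> x y = dV \<phi> y x" by (rule dV_commute)
  show "dV \<phi> x z \<le> dV \<phi> x y + dV \<phi> y z" by (rule dV_triangle)
  assume x: "x \<in> Clf_inf" and y: "y \<in> Clf_inf"
  show "dV \<phi> x y = 0 \<longleftrightarrow> x = y"
  proof
    assume 0: "dV \<phi> x y = 0"
    show "x = y"
    proof (rule ccontr)
      assume "x \<noteq> y"
      then obtain a where "a \<in> x \<and> a \<notin> y \<or> a \<in> y \<and> a \<notin> x" by blast
      then show False
        using dV_pos[OF assms x y, of a] dV_pos[OF assms y x, of a] 0 dV_commute[of \<phi> x y] by auto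
    qed
  qed (simp add: dV_self)
qed



definition locfin :: "complex set \<Rightarrow> bool" where
  "locfin A \<longleftrightarrow> (\<forall>K. compact K \<longrightarrow> finite (A \<inter> K))"

definition sc :: "complex \<Rightarrow> real \<Rightarrow> complex \<Rightarrow> complex" where
  "sc p c z = p + complex_of_real c * (z - p)"

lemma lf_sum_superset':
  assumes "finite T" "{a\<in>A. f a \<noteq> 0} \<subseteq> T" "T \<subseteq> A"
  shows "lf_sum f A = (\<Sum>a\<in>T. f a)"
  unfolding lf_sum_def
  by (rule sum.mono_neutral_left) (use assms in auto)

lemma locfinI:
  assumes "\<And>R. finite (A \<inter> cball 0 R)"
  shows "locfin A"
  unfolding locfin_def
proof (intro allI impI)
  fix K :: "complex set" assume "compact K"
  then obtain b where "\<forall>x\<in>K. norm x \<le> b" using compact_imp_bounded bounded_pos by metis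
  then have "A \<inter> K \<subseteq> A \<inter> cball 0 b" by auto
  then show "finite (A \<inter> K)" using assms finite_subset by blast
qed

lemma locfinD: "locfin A \<Longrightarrow> finite (A \<inter> cball c R)"
  unfolding locfin_def by simp

lemma Clf_inf_iff: "A \<in> Clf_inf \<longleftrightarrow> infinite A \<and> countable A \<and> locfin A"
  by (simp add: Clf_inf_def locfin_def)

lemma sc_one [simp]: "sc p 1 z = z"
  by (simp add: sc_def)

lemma sc_inj: "c \<noteq> 0 \<Longrightarrow> inj_on (sc p c) X"
  by (auto simp: inj_on_def sc_def)

lemma norm_sc: "norm (sc p c z - p) = \<bar>c\<bar> * norm (z - p)"
  by (simp add: sc_def norm_mult)

lemma sc_locfin:
  assumes "locfin A" "c \<noteq> 0"
  shows "locfin (sc p c ` A)"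
proof (rule locfinI)
  fix R
  have "sc p c ` A \<inter> cball 0 R \<subseteq> sc p c ` (A \<inter> cball p ((R + norm p) / \<bar>c\<bar>))"
  proof
    fix z assume "z \<in> sc p c ` A \<inter> cball 0 R"
    then obtain a where a: "a \<in> A" "z = sc p c a" "norm z \<le> R" by auto
    have "\<bar>c\<bar> * norm (a - p) = norm (z - p)" using a norm_sc by simp
    also have "\<dots> \<le> R + norm p" using a(3) norm_triangle_ineq4[of z p] by linarith
    finally have "norm (a - p) \<le> (R + norm p) / \<bar>c\<bar>"
      using assms(2) by (simp add: field_simps)
    then show "z \<in> sc p c ` (A \<inter> cball p ((R + norm p) / \<bar>c\<bar>))"
      using a by (auto simp: dist_norm norm_minus_commute)
  qed
  moreover have "finite (sc p c ` (A \<inter> cball p ((R + norm p) / \<bar>c\<bar>)))"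
    using locfinD[OF assms(1)] by simp
  ultimately show "finite (sc p c ` A \<inter> cball 0 R)" using finite_subset by blast
qed

lemma sc_Clf:
  assumes "A \<in> Clf_inf" "c \<noteq> 0"
  shows "sc p c ` A \<in> Clf_inf"
  using assms sc_locfin[of A c p] sc_inj[of c p A] finite_imageD
  by (auto simp: Clf_inf_iff)

lemma Un_Clf:
  assumes "A \<in> Clf_inf" "countable B" "locfin B"
  shows "A \<union> B \<in> Clf_inf" "B \<union> A \<in> Clf_inf"
  using assms by (auto simp: Clf_inf_iff locfin_def Int_Un_distrib2)

lemma S_Clf:
  fixes u p :: complex
  assumes "u \<noteq> 0"
  shows "range (\<lambda>n. p + of_nat (Suc n) * u) \<in> Clf_inf"
proof -
  let ?g = "\<lambda>n::nat. p + of_nat (Suc n) * u"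
  have inj: "inj ?g" using assms by (auto simp: inj_on_def)
  have "locfin (range ?g)"
  proof (rule locfinI)
    fix R
    have "range ?g \<inter> cball 0 R \<subseteq> ?g ` {..nat \<lceil>(R + norm p) / norm u\<rceil>}"
    proof
      fix z assume "z \<in> range ?g \<inter> cball 0 R"
      then obtain n where n: "z = ?g n" "norm z \<le> R" by auto
      have "z - p = of_nat (Suc n) * u" using n by simp
      then have "real (Suc n) * norm u = norm (z - p)" by (metis norm_mult norm_of_nat)
      also have "\<dots> \<le> R + norm p" using n(2) norm_triangle_ineq4[of z p] by linarith
      finally have "real (Suc n) \<le> (R + norm p) / norm u"
        using assms by (simp add: field_simps)
      then have "n \<le> nat \<lceil>(R + norm p) / norm u\<rceil>" by linarith
      then show "z \<in> ?g ` {..nat \<lceil>(R + norm p) / norm u\<rceil>}" using n by auto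
    qed
    then show "finite (range ?g \<inter> cball 0 R)" using finite_subset by blast
  qed
  then show ?thesis using inj by (auto simp: Clf_inf_iff dest: finite_imageD)
qed

lemma lf_sum_union:
  assumes "locfin X" "locfin Y" "compact (closure {z. f z \<noteq> 0})" "X \<inter> Y = {}"
  shows "lf_sum f (X \<union> Y) = lf_sum f X + lf_sum f Y"
proof -
  have fX: "finite {a\<in>X. f a \<noteq> 0}"
    using assms(1,3) unfolding locfin_def
    by (rule_tac finite_subset[of _ "X \<inter> closure {z. f z \<noteq> 0}"]) (auto intro: closure_subset[THEN subsetD])
  have fY: "finite {a\<in>Y. f a \<noteq> 0}"
    using assms(2,3) unfolding locfin_def
    by (rule_tac finite_subset[of _ "Y \<inter> closure {z. f z \<noteq> 0}"]) (auto intro: closure_subset[THEN subsetD])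
  have "{a\<in>X \<union> Y. f a \<noteq> 0} = {a\<in>X. f a \<noteq> 0} \<union> {a\<in>Y. f a \<noteq> 0}" by auto
  then show ?thesis unfolding lf_sum_def
    using sum.union_disjoint[OF fX fY] assms(4) by auto
qed

lemma G_props:
  assumes A: "locfin A" and p: "p \<notin> A" and fc: "continuous_on UNIV f"
    and fs: "compact (closure {z. f z \<noteq> 0})"
  shows "\<exists>C0\<ge>1. (\<forall>c\<ge>C0. lf_sum f (sc p c ` A) = 0) \<and> continuous_on {1..} (\<lambda>c. lf_sum f (sc p c ` A))"
proof -
  from compact_imp_bounded[OF fs] obtain R0 where R0: "\<forall>x\<in>closure {z. f z \<noteq> 0}. norm x \<le> R0"
    unfolding bounded_pos by auto
  define R where "R = max R0 0"
  have R1: "R \<ge> 0" by (simp add: R_def)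
  have R2: "norm z \<le> R" if "f z \<noteq> 0" for z
  proof -
    have "z \<in> closure {z. f z \<noteq> 0}" by (rule subsetD[OF closure_subset]) (simp add: that)
    then have "norm z \<le> R0" using R0 by blast
    then show ?thesis by (simp add: R_def)
  qed
  note R = R1 R2
  define F where "F = A \<inter> cball p (R + norm p)"
  have finF: "finite F" unfolding F_def by (rule locfinD[OF A])
  have rep: "lf_sum f (sc p c ` A) = (\<Sum>a\<in>F. f (sc p c a))" if c: "c \<ge> 1" for c
  proof -
    have "lf_sum f (sc p c ` A) = (\<Sum>z\<in>sc p c ` F. f z)"
    proof (rule lf_sum_superset')
      show "finite (sc p c ` F)" using finF by simp
      show "sc p c ` F \<subseteq> sc p c ` A" by (auto simp: F_def)
      show "{a \<in> sc p c ` A. f a \<noteq> 0} \<subseteq> sc p c ` F"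
      proof
        fix z assume "z \<in> {a \<in> sc p c ` A. f a \<noteq> 0}"
        then obtain a where a: "a \<in> A" "z = sc p c a" "f z \<noteq> 0" by auto
        have "norm (a - p) \<le> \<bar>c\<bar> * norm (a - p)"
          using c by (simp add: mult_le_cancel_right1)
        also have "\<dots> = norm (z - p)" using a norm_sc by simp
        also have "\<dots> \<le> R + norm p" using R(2)[OF a(3)] norm_triangle_ineq4[of z p] by linarith
        finally show "z \<in> sc p c ` F" using a by (auto simp: F_def dist_norm norm_minus_commute)
      qed
    qed
    also have "\<dots> = (\<Sum>a\<in>F. f (sc p c a))"
      using c by (subst sum.reindex) (auto intro: sc_inj)
    finally show ?thesis .
  qed
  have cont: "continuous_on {1..} (\<lambda>c. lf_sum f (sc p c ` A))"
  proof -
    have "continuous_on {1..} (\<lambda>c. \<Sum>a\<in>F. f (sc p c a))"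
    proof (intro continuous_on_sum)
      fix a
      have "continuous_on {1..} (\<lambda>c. sc p c a)" unfolding sc_def by (intro continuous_intros)
      then show "continuous_on {1..} (\<lambda>c. f (sc p c a))"
        using continuous_on_compose2[OF fc] by blast
    qed
    then show ?thesis by (rule continuous_on_eq) (simp add: rep)
  qed
  have "finite (A \<inter> cball p 1)" by (rule locfinD[OF A])
  then obtain \<delta> where \<delta>: "\<delta> > 0" "\<And>x. x \<in> A \<inter> cball p 1 \<Longrightarrow> x \<noteq> p \<Longrightarrow> \<delta> \<le> dist p x"
    using finite_set_avoid[of "A \<inter> cball p 1" p] by blast
  define \<delta>' where "\<delta>' = min \<delta> 1"
  have \<delta>': "\<delta>' > 0" using \<delta> by (simp add: \<delta>'_def)
  have far: "\<delta>' \<le> norm (a - p)" if "a \<in> A" for a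
  proof (cases "dist p a \<le> 1")
    case True
    have "a \<noteq> p" using that p by auto
    then have "\<delta> \<le> norm (a - p)" using \<delta>(2)[of a] that True by (auto simp: dist_norm norm_minus_commute)
    then show ?thesis by (simp add: \<delta>'_def)
  next
    case False then show ?thesis by (auto simp: \<delta>'_def dist_norm norm_minus_commute)
  qed
  define C0 where "C0 = (R + norm p) / \<delta>' + 1"
  have "0 \<le> (R + norm p) / \<delta>'" using R1 \<delta>' by simp
  then have C0: "C0 \<ge> 1" by (simp add: C0_def)
  have van: "lf_sum f (sc p c ` A) = 0" if c: "c \<ge> C0" for c
  proof -
    have "f z = 0" if z: "z \<in> sc p c ` A" for z
    proof (rule ccontr)
      assume fz: "f z \<noteq> 0"
      obtain a where a: "a \<in> A" "z = sc p c a" using z by auto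
      have cpos: "c > 0" using c C0 by simp
      have "(R + norm p) / \<delta>' * \<delta>' = R + norm p" using \<delta>' by simp
      then have "C0 * \<delta>' = (R + norm p) + \<delta>'" unfolding C0_def by (simp only: distrib_right mult_1_left)
      then have "R + norm p < C0 * \<delta>'" using \<delta>' by linarith
      also have "\<dots> \<le> c * norm (a - p)"
        using c far[OF a(1)] \<delta>' C0 by (intro mult_mono) auto
      also have "\<dots> = norm (z - p)" using a norm_sc cpos by simp
      also have "\<dots> \<le> norm z + norm p" by (rule norm_triangle_ineq4)
      finally show False using R(2)[OF fz] by linarith
    qed
    then have "{a \<in> sc p c ` A. f a \<noteq> 0} = {}" by auto
    then show ?thesis by (simp add: lf_sum_def)
  qed
  have "\<forall>c\<ge>C0. lf_sum f (sc p c ` A) = 0" using van by simp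
  with C0 cont show ?thesis by (intro exI[of _ C0]) simp
qed

lemma Q_cont:
  fixes G :: "real \<Rightarrow> real"
  assumes G: "continuous_on {1..} G" and C0: "C0 \<ge> 1" and van: "\<And>c. c \<ge> C0 \<Longrightarrow> G c = 0"
  shows "continuous_on {0..1} (\<lambda>t. if t < 1 then G (1 / (1 - t)) else 0)"
proof -
  define t0 where "t0 = 1 - 1 / C0"
  have t0: "0 \<le> t0" "t0 < 1" using C0 by (auto simp: t0_def)
  have c1: "continuous_on {0..1} (\<lambda>t. if t \<le> t0 then G (1 / (1 - t)) else 0)"
  proof (rule continuous_on_cases_le[where h = "\<lambda>t. t", OF _ _ continuous_on_id])
    have "continuous_on {t \<in> {0..1}. t \<le> t0} (\<lambda>t. 1 / (1 - t))"
      using t0 by (intro continuous_intros) auto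
    moreover have "(\<lambda>t. 1 / (1 - t)) ` {t \<in> {0..1}. t \<le> t0} \<subseteq> {1..}"
      using t0 by (auto simp: field_simps)
    ultimately show "continuous_on {t \<in> {0..1}. t \<le> t0} (\<lambda>t. G (1 / (1 - t)))"
      using continuous_on_compose2[OF G] by blast
    show "continuous_on {t \<in> {0..1}. t0 \<le> t} (\<lambda>t. 0::real)" by simp
    fix t assume "t \<in> {0..1::real}" "t = t0"
    then show "G (1 / (1 - t)) = 0" using van C0 by (simp add: t0_def)
  qed
  have e1: "(if t \<le> t0 then G (1 / (1 - t)) else 0) = (if t < 1 then G (1 / (1 - t)) else 0)"
    if "t \<in> {0..1}" for t
  proof (cases "t \<le> t0")
    case True then show ?thesis using t0 by simp
  next
    case False
    show ?thesis
    proof (cases "t < 1")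
      case True
      have "C0 \<le> 1 / (1 - t)" using False True C0 by (simp add: t0_def field_simps)
      then show ?thesis using van False by simp
    qed (use False in simp)
  qed
  show ?thesis by (rule continuous_on_eq[OF c1]) (rule e1)
qed

lemma Q_cont':
  fixes G :: "real \<Rightarrow> real"
  assumes G: "continuous_on {1..} G" and C0: "C0 \<ge> 1" and van: "\<And>c. c \<ge> C0 \<Longrightarrow> G c = 0"
  shows "continuous_on {0..1} (\<lambda>t. if 0 < t then G (1 / t) else 0)"
proof -
  have "continuous_on {0..1} (\<lambda>t. (\<lambda>t. if t < 1 then G (1 / (1 - t)) else 0) (1 - t))"
    by (rule continuous_on_compose2[OF Q_cont[OF G C0 van]]) (auto intro!: continuous_intros)
  moreover have "(\<lambda>t. (\<lambda>t. if t < 1 then G (1 / (1 - t)) else 0) (1 - t)) = (\<lambda>t. if 0 < t then G (1 / t) else 0)"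
    by (rule ext) (simp add: algebra_simps)
  ultimately show ?thesis by metis
qed



lemma term_bound: "norm ((1/2::real)^Suc k * (\<bar>x\<bar> / (1 + \<bar>x\<bar>))) \<le> (1/2)^Suc k"
proof -
  have "(1/2::real)^Suc k * (\<bar>x\<bar> / (1 + \<bar>x\<bar>)) \<le> (1/2)^Suc k * 1"
    by (rule mult_left_mono[OF frac_le1]) simp
  then show ?thesis by (simp del: power_Suc)
qed

lemma dV_tendsto:
  assumes lim0: "\<And>j. ((\<lambda>s. lf_sum (\<phi> j) (g s)) \<longlongrightarrow> lf_sum (\<phi> j) X) F"
  shows "((\<lambda>s. dV \<phi> X (g s)) \<longlongrightarrow> 0) F"
proof (cases "F = bot")
  case True then show ?thesis by simp
next
  case False
  define a where "a k s = (1/2::real)^Suc k * (\<bar>lf_sum (\<phi> k) X - lf_sum (\<phi> k) (g s)\<bar> / (1 + \<bar>lf_sum (\<phi> k) X - lf_sum (\<phi> k) (g s)\<bar>))" for k s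
  have lim: "((\<lambda>s. a k s) \<longlongrightarrow> 0) F" for k
  proof -
    have "((\<lambda>s. a k s) \<longlongrightarrow> (1/2)^Suc k * (\<bar>lf_sum (\<phi> k) X - lf_sum (\<phi> k) X\<bar> / (1 + \<bar>lf_sum (\<phi> k) X - lf_sum (\<phi> k) X\<bar>))) F"
      unfolding a_def by (intro tendsto_intros lim0) auto
    then show ?thesis by simp
  qed
  have bound: "eventually (\<lambda>(k,s). norm (a k s) \<le> (1/2::real)^Suc k) (at_top \<times>\<^sub>F F)"
  proof (rule always_eventually, safe)
    fix k s show "norm (a k s) \<le> (1/2::real)^Suc k" unfolding a_def by (rule term_bound)
  qed
  have "((\<lambda>s. suminf (\<lambda>k. a k s)) \<longlongrightarrow> suminf (\<lambda>k. 0::real)) F"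
    using tannerys_theorem[OF lim bound geom_summable False] by blast
  moreover have "(\<lambda>s. dV \<phi> X (g s)) = (\<lambda>s. suminf (\<lambda>k. a k s))"
    by (rule ext) (simp only: dV_def a_def)
  ultimately show ?thesis by simp
qed

lemma pathin_mtop:
  assumes ms: "Metric_space M d"
    and inM: "\<And>t. t \<in> {0..1} \<Longrightarrow> g t \<in> M"
    and lim: "\<And>t. t \<in> {0..1} \<Longrightarrow> ((\<lambda>s. d (g t) (g s)) \<longlongrightarrow> 0) (at t within {0..1})"
  shows "pathin (Metric_space.mtopology M d) g"
  unfolding pathin_def continuous_map_def Metric_space.topspace_mtopology[OF ms]
proof (intro conjI allI impI)
  show "g \<in> topspace (top_of_set {0..1}) \<rightarrow> M" using inM by auto
  fix U assume U: "openin (Metric_space.mtopology M d) U"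
  have "openin (top_of_set {0..1}) {x \<in> {0..1}. g x \<in> U}"
    unfolding openin_euclidean_subtopology_iff
  proof (intro conjI ballI)
    fix t assume t: "t \<in> {x \<in> {0..1::real}. g x \<in> U}"
    then obtain r where r: "r > 0" "Metric_space.mball M d (g t) r \<subseteq> U"
      using U unfolding Metric_space.openin_mtopology[OF ms] by blast
    have "\<forall>e>0. \<forall>\<^sub>F s in at t within {0..1}. dist (d (g t) (g s)) 0 < e"
    proof -
      have t01: "t \<in> {0..1}" using t by simp
      show ?thesis using lim[OF t01] by (simp only: tendsto_iff)
    qed
    then have "\<forall>\<^sub>F s in at t within {0..1}. dist (d (g t) (g s)) 0 < r" using r(1) by blast
    then have "\<forall>\<^sub>F s in at t within {0..1}. d (g t) (g s) < r"
      by (rule eventually_mono) (simp add: dist_real_def)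
    then obtain e where e: "e > 0" "\<And>s. s \<in> {0..1} \<Longrightarrow> s \<noteq> t \<Longrightarrow> dist s t < e \<Longrightarrow> d (g t) (g s) < r"
      unfolding eventually_at by blast
    show "\<exists>e>0. \<forall>x'\<in>{0..1}. dist x' t < e \<longrightarrow> x' \<in> {x \<in> {0..1}. g x \<in> U}"
    proof (intro exI[of _ e] conjI ballI impI)
      fix s :: real assume s: "s \<in> {0..1}" "dist s t < e"
      show "s \<in> {x \<in> {0..1}. g x \<in> U}"
      proof (cases "s = t")
        case True then show ?thesis using t by simp
      next
        case False
        then have "d (g t) (g s) < r" using e s by auto
        then have "g s \<in> Metric_space.mball M d (g t) r"
          using inM s t by (simp add: Metric_space.in_mball[OF ms])
        then show ?thesis using r s by auto
      qed
    qed (use e in auto)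
  qed auto
  then show "openin (top_of_set {0..1}) {x \<in> topspace (top_of_set {0..1}). g x \<in> U}"
    by simp
qed

lemma sgn_pos_scale: "c > 0 \<Longrightarrow> sgn (complex_of_real c * w) = sgn w"
  by (simp add: sgn_mult sgn_of_real)

lemma sc_one_fun: "sc p 1 = (\<lambda>z. z)"
  by (rule ext) simp



lemma path_to_S:
  assumes adm: "admissible_seq \<phi>" and A: "A \<in> Clf_inf" and p: "p \<notin> A"
    and u: "norm u = 1" and dir: "\<forall>a\<in>A. sgn (a - p) \<noteq> u"
  shows "path_component_of (Metric_space.mtopology Clf_inf (dV \<phi>)) A (range (\<lambda>n. p + of_nat (Suc n) * u))"
proof -
  define S where "S = range (\<lambda>n. p + of_nat (Suc n) * u)"
  have u0: "u \<noteq> 0" using u by auto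
  have S: "S \<in> Clf_inf" unfolding S_def by (rule S_Clf[OF u0])
  have pS: "p \<notin> S"
  proof
    assume "p \<in> S"
    then obtain n where "p = p + of_nat (Suc n) * u" by (auto simp: S_def)
    then have "of_nat (Suc n) * u = 0" by simp
    then show False using of_nat_neq_0[of n, where 'a=complex] u0 mult_eq_0_iff by metis
  qed
  have lfA: "locfin A" and lfS: "locfin S" and cA: "countable A" and cS: "countable S"
    using A S by (auto simp: Clf_inf_iff)
  define X where "X t = (if t < 1 then sc p (1 / (1 - t)) ` A else {})" for t :: real
  define Y where "Y t = (if 0 < t then sc p (1 / t) ` S else {})" for t :: real
  define \<gamma> where "\<gamma> t = X t \<union> Y t" for t
  have g0: "\<gamma> 0 = A" by (simp add: \<gamma>_def X_def Y_def sc_one_fun)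
  have g1: "\<gamma> 1 = S" by (simp add: \<gamma>_def X_def Y_def sc_one_fun)
  have lfX: "locfin (X t)" and cX: "countable (X t)" for t
    using sc_locfin[OF lfA] cA by (auto simp: X_def locfin_def)
  have lfY: "locfin (Y t)" and cY: "countable (Y t)" for t
    using sc_locfin[OF lfS] cS by (auto simp: Y_def locfin_def)
  have mem: "\<gamma> t \<in> Clf_inf" if t: "t \<in> {0..1}" for t
  proof (cases "t < 1")
    case True
    then have "X t \<in> Clf_inf" using sc_Clf[OF A] by (simp add: X_def)
    then show ?thesis unfolding \<gamma>_def by (rule Un_Clf(1)[OF _ cY lfY])
  next
    case False
    then have "t = 1" using t by simp
    then show ?thesis using g1 S by simp
  qed
  have disj: "X t \<inter> Y t = {}" for t
  proof (cases "0 < t \<and> t < 1")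
    case True
    show ?thesis
    proof (rule ccontr)
      assume "X t \<inter> Y t \<noteq> {}"
      then obtain a n where a: "a \<in> A" and eq: "sc p (1 / (1 - t)) a = sc p (1 / t) (p + of_nat (Suc n) * u)"
        using True by (auto simp: X_def Y_def S_def)
      have l: "1 / (1 - t) > 0" and m: "1 / t * real (Suc n) > 0" using True by auto
      have "complex_of_real (1 / (1 - t)) * (a - p) = complex_of_real (1 / t * real (Suc n)) * u"
        using eq by (simp add: sc_def)
      then have "sgn (complex_of_real (1 / (1 - t)) * (a - p)) = sgn (complex_of_real (1 / t * real (Suc n)) * u)"
        by simp
      then have "sgn (a - p) = sgn u" using sgn_pos_scale[OF l] sgn_pos_scale[OF m] by simp
      moreover have "sgn u = u" using u by (simp add: sgn_div_norm)
      ultimately show False using dir a by simp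
    qed
  next
    case False
    then show ?thesis by (auto simp: X_def Y_def)
  qed
  have cont: "continuous_on {0..1} (\<lambda>t. lf_sum (\<phi> j) (\<gamma> t))" for j
  proof -
    have fc: "continuous_on UNIV (\<phi> j)" and fs: "compact (closure {z. \<phi> j z \<noteq> 0})"
      using adm by (auto simp: admissible_seq_def)
    obtain C1 where C1: "C1 \<ge> 1" "\<forall>c\<ge>C1. lf_sum (\<phi> j) (sc p c ` A) = 0"
      "continuous_on {1..} (\<lambda>c. lf_sum (\<phi> j) (sc p c ` A))"
      using G_props[OF lfA p fc fs] by blast
    obtain C2 where C2: "C2 \<ge> 1" "\<forall>c\<ge>C2. lf_sum (\<phi> j) (sc p c ` S) = 0"
      "continuous_on {1..} (\<lambda>c. lf_sum (\<phi> j) (sc p c ` S))"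
      using G_props[OF lfS pS fc fs] by blast
    have h1: "continuous_on {0..1} (\<lambda>t. if t < 1 then lf_sum (\<phi> j) (sc p (1 / (1 - t)) ` A) else 0)"
      by (rule Q_cont[OF C1(3) C1(1)]) (use C1(2) in blast)
    have h2: "continuous_on {0..1} (\<lambda>t. if 0 < t then lf_sum (\<phi> j) (sc p (1 / t) ` S) else 0)"
      by (rule Q_cont'[OF C2(3) C2(1)]) (use C2(2) in blast)
    have "continuous_on {0..1} (\<lambda>t. (if t < 1 then lf_sum (\<phi> j) (sc p (1 / (1 - t)) ` A) else 0)
        + (if 0 < t then lf_sum (\<phi> j) (sc p (1 / t) ` S) else 0))"
      by (rule continuous_on_add[OF h1 h2])
    moreover have "(if t < 1 then lf_sum (\<phi> j) (sc p (1 / (1 - t)) ` A) else 0)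
        + (if 0 < t then lf_sum (\<phi> j) (sc p (1 / t) ` S) else 0) = lf_sum (\<phi> j) (\<gamma> t)" for t
    proof -
      have "lf_sum (\<phi> j) (\<gamma> t) = lf_sum (\<phi> j) (X t) + lf_sum (\<phi> j) (Y t)"
        unfolding \<gamma>_def by (rule lf_sum_union[OF lfX lfY fs disj])
      then show ?thesis by (simp add: X_def Y_def lf_sum_def)
    qed
    ultimately show ?thesis by (rule continuous_on_eq)
  qed
  have "pathin (Metric_space.mtopology Clf_inf (dV \<phi>)) \<gamma>"
  proof (rule pathin_mtop[OF dV_metric[OF adm]])
    show "\<gamma> t \<in> Clf_inf" if "t \<in> {0..1}" for t using mem that .
    fix t :: real assume t: "t \<in> {0..1}"
    show "((\<lambda>s. dV \<phi> (\<gamma> t) (\<gamma> s)) \<longlongrightarrow> 0) (at t within {0..1})"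
    proof (rule dV_tendsto)
      fix j show "((\<lambda>s. lf_sum (\<phi> j) (\<gamma> s)) \<longlongrightarrow> lf_sum (\<phi> j) (\<gamma> t)) (at t within {0..1})"
        using cont[of j] t unfolding continuous_on_def by blast
    qed
  qed
  then show ?thesis unfolding path_component_of_def S_def[symmetric]
    using g0 g1 by blast
qed

theorem mainTheorem7:
  fixes \<phi> :: "nat \<Rightarrow> complex \<Rightarrow> real"
  assumes "admissible_seq \<phi>"
  shows "path_connected_space (Metric_space.mtopology Clf_inf (dV \<phi>))"
  unfolding path_connected_space_iff_path_component Metric_space.topspace_mtopology[OF dV_metric[OF assms]]
proof (intro ballI)
  fix A B assume A: "A \<in> Clf_inf" and B: "B \<in> Clf_inf"
  have cAB: "countable (A \<union> B)" using A B by (auto simp: Clf_inf_def)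
  obtain p where p: "p \<notin> A \<union> B"
    using ball_minus_countable_nonempty[OF cAB, of 1 0] by auto
  let ?D = "sgn ` ((\<lambda>a. a - p) ` (A \<union> B))"
  have cD: "countable ?D" using cAB by simp
  have "connected (sphere (0::complex) 1)" by (rule connected_sphere) simp
  then have "uncountable (sphere (0::complex) 1)"
    by (rule connected_uncountable[where a=1 and b="-1"]) auto
  then have "uncountable (sphere (0::complex) 1 - ?D)"
    using cD by (rule uncountable_minus_countable)
  then obtain u where u: "u \<in> sphere (0::complex) 1" "u \<notin> ?D"
    by (metis Diff_iff countable_empty ex_in_conv)
  have un: "norm u = 1" using u by simp
  have dA: "\<forall>a\<in>A. sgn (a - p) \<noteq> u" and dB: "\<forall>a\<in>B. sgn (a - p) \<noteq> u" using u by auto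
  have 1: "path_component_of (Metric_space.mtopology Clf_inf (dV \<phi>)) A (range (\<lambda>n. p + of_nat (Suc n) * u))"
    by (rule path_to_S[OF assms A _ un dA]) (use p in auto)
  have 2: "path_component_of (Metric_space.mtopology Clf_inf (dV \<phi>)) B (range (\<lambda>n. p + of_nat (Suc n) * u))"
    by (rule path_to_S[OF assms B _ un dB]) (use p in auto)
  show "path_component_of (Metric_space.mtopology Clf_inf (dV \<phi>)) A B"
    using path_component_of_trans[OF 1 path_component_of_sym[OF 2]] .
qed

end
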